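(* Let $\mathcal{E}$ be an elementary topos with subobject classifier $\Omega$, let $\circledcirc:\Omega\to\Omega$ be a strong Löb operator, and let $f:X\to X$ be $\circledcirc$-contractive. Then $f$ is non-expansive, and hence its subobject of fixed points is a maximal subterminal one, i.e. $\mathcal{E}\models \mathsf{MaxST}(\lambda x{:}X.(x\approx f x))$.
   Context: Statements are in the internal (Mitchell–Bénabou) language of $\mathcal{E}$; $\mathcal{E}\models\phi$ means the closed formula $\phi$ is interpreted as $\mathrm{true}:1\to\Omega$. $\circledcirc$ is a strong Löb operator if $\mathcal{E}\models\forall p{:}\Omega.((\circledcirc p\Rightarrow p)\Rightarrow p)$. $f$ is $\circledcirc$-contractive if $\mathcal{E}\models\forall x,y{:}X.(\circledcirc(x\approx y)\Rightarrow f x\approx f y)$. $f$ is non-expansive if $\mathcal{E}\models\forall x,y{:}X.((f x\approx f y\Rightarrow x\approx y)\Rightarrow x\approx y)$. For $\phi:\Omega^X$: $\mathsf{SubTe}(\phi):=\forall x,y{:}X.(\phi(x)\wedge\phi(y)\Rightarrow x\approx y)$; $\phi\subseteq\psi:=\forall x{:}X.(\phi(x)\Rightarrow\psi(x))$; $\mathsf{MaxST}(\phi):=\mathsf{SubTe}(\phi)\wedge\forall\alpha{:}\Omega^X.(\mathsf{SubTe}(\alpha)\wedge\phi\subseteq\alpha\Rightarrow\alpha\subseteq\phi)$. *)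

theory Defs
  imports Main
begin

text \<open>Signature: domain, codomain, identities, composition (t_comp g f = g o f),
  terminal object with unique arrows, binary products, exponentials
  (t_exp X Y is Y^X, t_ev X Y : Y^X x X -> Y, t_lam G X h : G -> Y^X the
  transpose of h : G x X -> Y), subobject classifier true : 1 -> Omega.\<close>

record ('o, 'a) topos_sig =
  t_dom   :: "'a \<Rightarrow> 'o"
  t_cod   :: "'a \<Rightarrow> 'o"
  t_id    :: "'o \<Rightarrow> 'a"
  t_comp  :: "'a \<Rightarrow> 'a \<Rightarrow> 'a"
  t_one   :: "'o"
  t_bang  :: "'o \<Rightarrow> 'a"
  t_prod  :: "'o \<Rightarrow> 'o \<Rightarrow> 'o"
  t_pi1   :: "'o \<Rightarrow> 'o \<Rightarrow> 'a"
  t_pi2   :: "'o \<Rightarrow> 'o \<Rightarrow> 'a"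
  t_pair  :: "'a \<Rightarrow> 'a \<Rightarrow> 'a"
  t_exp   :: "'o \<Rightarrow> 'o \<Rightarrow> 'o"
  t_ev    :: "'o \<Rightarrow> 'o \<Rightarrow> 'a"
  t_lam   :: "'o \<Rightarrow> 'o \<Rightarrow> 'a \<Rightarrow> 'a"
  t_Omega :: "'o"
  t_true  :: "'a"

definition is_category :: "('o, 'a, 'z) topos_sig_scheme \<Rightarrow> bool" where
  "is_category C \<longleftrightarrow>
     (\<forall>A. t_dom C (t_id C A) = A \<and> t_cod C (t_id C A) = A) \<and>
     (\<forall>f g. t_cod C f = t_dom C g \<longrightarrow>
        t_dom C (t_comp C g f) = t_dom C f \<and> t_cod C (t_comp C g f) = t_cod C g) \<and>
     (\<forall>f. t_comp C f (t_id C (t_dom C f)) = f \<and> t_comp C (t_id C (t_cod C f)) f = f) \<and>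
     (\<forall>f g h. t_cod C f = t_dom C g \<and> t_cod C g = t_dom C h \<longrightarrow>
        t_comp C h (t_comp C g f) = t_comp C (t_comp C h g) f)"

definition is_mono :: "('o, 'a, 'z) topos_sig_scheme \<Rightarrow> 'a \<Rightarrow> bool" where
  "is_mono C m \<longleftrightarrow>
     (\<forall>g h. t_cod C g = t_dom C m \<and> t_cod C h = t_dom C m \<and> t_dom C g = t_dom C h \<and>
        t_comp C m g = t_comp C m h \<longrightarrow> g = h)"

definition is_pullback :: "('o, 'a, 'z) topos_sig_scheme \<Rightarrow> 'a \<Rightarrow> 'a \<Rightarrow> 'a \<Rightarrow> 'a \<Rightarrow> bool" where
  "is_pullback C f g p q \<longleftrightarrow>
     t_cod C f = t_cod C g \<and> t_dom C p = t_dom C q \<and>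
     t_cod C p = t_dom C f \<and> t_cod C q = t_dom C g \<and>
     t_comp C f p = t_comp C g q \<and>
     (\<forall>p' q'. t_dom C p' = t_dom C q' \<and> t_cod C p' = t_dom C f \<and> t_cod C q' = t_dom C g \<and>
        t_comp C f p' = t_comp C g q' \<longrightarrow>
        (\<exists>!u. t_dom C u = t_dom C p' \<and> t_cod C u = t_dom C p \<and>
              t_comp C p u = p' \<and> t_comp C q u = q'))"

definition is_equalizer :: "('o, 'a, 'z) topos_sig_scheme \<Rightarrow> 'a \<Rightarrow> 'a \<Rightarrow> 'a \<Rightarrow> bool" where
  "is_equalizer C e f g \<longleftrightarrow>
     t_dom C f = t_dom C g \<and> t_cod C f = t_cod C g \<and> t_cod C e = t_dom C f \<and>
     t_comp C f e = t_comp C g e \<and>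
     (\<forall>h. t_cod C h = t_dom C f \<and> t_comp C f h = t_comp C g h \<longrightarrow>
        (\<exists>!u. t_dom C u = t_dom C h \<and> t_cod C u = t_dom C e \<and> t_comp C e u = h))"

definition has_terminal :: "('o, 'a, 'z) topos_sig_scheme \<Rightarrow> bool" where
  "has_terminal C \<longleftrightarrow>
     (\<forall>A. t_dom C (t_bang C A) = A \<and> t_cod C (t_bang C A) = t_one C) \<and>
     (\<forall>A h. t_dom C h = A \<and> t_cod C h = t_one C \<longrightarrow> h = t_bang C A)"

definition has_products :: "('o, 'a, 'z) topos_sig_scheme \<Rightarrow> bool" where
  "has_products C \<longleftrightarrow>
     (\<forall>A B. t_dom C (t_pi1 C A B) = t_prod C A B \<and> t_cod C (t_pi1 C A B) = A \<and>
            t_dom C (t_pi2 C A B) = t_prod C A B \<and> t_cod C (t_pi2 C A B) = B) \<and>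
     (\<forall>f g. t_dom C f = t_dom C g \<longrightarrow>
        t_dom C (t_pair C f g) = t_dom C f \<and>
        t_cod C (t_pair C f g) = t_prod C (t_cod C f) (t_cod C g) \<and>
        t_comp C (t_pi1 C (t_cod C f) (t_cod C g)) (t_pair C f g) = f \<and>
        t_comp C (t_pi2 C (t_cod C f) (t_cod C g)) (t_pair C f g) = g \<and>
        (\<forall>h. t_dom C h = t_dom C f \<and> t_cod C h = t_prod C (t_cod C f) (t_cod C g) \<and>
             t_comp C (t_pi1 C (t_cod C f) (t_cod C g)) h = f \<and>
             t_comp C (t_pi2 C (t_cod C f) (t_cod C g)) h = g \<longrightarrow> h = t_pair C f g))"

definition has_equalizers :: "('o, 'a, 'z) topos_sig_scheme \<Rightarrow> bool" where
  "has_equalizers C \<longleftrightarrow>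
     (\<forall>f g. t_dom C f = t_dom C g \<and> t_cod C f = t_cod C g \<longrightarrow> (\<exists>e. is_equalizer C e f g))"

definition has_exponentials :: "('o, 'a, 'z) topos_sig_scheme \<Rightarrow> bool" where
  "has_exponentials C \<longleftrightarrow>
     (\<forall>X Y. t_dom C (t_ev C X Y) = t_prod C (t_exp C X Y) X \<and> t_cod C (t_ev C X Y) = Y) \<and>
     (\<forall>G X h. t_dom C h = t_prod C G X \<longrightarrow>
        t_dom C (t_lam C G X h) = G \<and> t_cod C (t_lam C G X h) = t_exp C X (t_cod C h) \<and>
        t_comp C (t_ev C X (t_cod C h))
          (t_pair C (t_comp C (t_lam C G X h) (t_pi1 C G X)) (t_pi2 C G X)) = h \<and>
        (\<forall>k. t_dom C k = G \<and> t_cod C k = t_exp C X (t_cod C h) \<and>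
             t_comp C (t_ev C X (t_cod C h))
               (t_pair C (t_comp C k (t_pi1 C G X)) (t_pi2 C G X)) = h \<longrightarrow> k = t_lam C G X h))"

definition has_subobject_classifier :: "('o, 'a, 'z) topos_sig_scheme \<Rightarrow> bool" where
  "has_subobject_classifier C \<longleftrightarrow>
     t_dom C (t_true C) = t_one C \<and> t_cod C (t_true C) = t_Omega C \<and>
     (\<forall>m. is_mono C m \<longrightarrow>
        (\<exists>!\<chi>. t_dom C \<chi> = t_cod C m \<and> t_cod C \<chi> = t_Omega C \<and>
              is_pullback C \<chi> (t_true C) m (t_bang C (t_dom C m))))"

definition elementary_topos :: "('o, 'a, 'z) topos_sig_scheme \<Rightarrow> bool" where
  "elementary_topos C \<longleftrightarrow> is_category C \<and> has_terminal C \<and> has_products C \<and>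
     has_equalizers C \<and> has_exponentials C \<and> has_subobject_classifier C"

section \<open>Mitchell--Benabou language: formulas in context G are arrows G -> Omega\<close>

definition t_char :: "('o, 'a, 'z) topos_sig_scheme \<Rightarrow> 'a \<Rightarrow> 'a" where
  "t_char C m = (THE \<chi>. t_dom C \<chi> = t_cod C m \<and> t_cod C \<chi> = t_Omega C \<and>
                       is_pullback C \<chi> (t_true C) m (t_bang C (t_dom C m)))"

definition t_truth :: "('o, 'a, 'z) topos_sig_scheme \<Rightarrow> 'o \<Rightarrow> 'a" where
  "t_truth C G = t_comp C (t_true C) (t_bang C G)"

definition conj_ar :: "('o, 'a, 'z) topos_sig_scheme \<Rightarrow> 'a" where
  "conj_ar C = t_char C (t_pair C (t_true C) (t_true C))"

definition imp_ar :: "('o, 'a, 'z) topos_sig_scheme \<Rightarrow> 'a" where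
  "imp_ar C = t_char C (SOME e. is_equalizer C e (conj_ar C) (t_pi1 C (t_Omega C) (t_Omega C)))"

definition eq_ar :: "('o, 'a, 'z) topos_sig_scheme \<Rightarrow> 'o \<Rightarrow> 'a" where
  "eq_ar C X = t_char C (t_pair C (t_id C X) (t_id C X))"

definition all_ar :: "('o, 'a, 'z) topos_sig_scheme \<Rightarrow> 'o \<Rightarrow> 'a" where
  "all_ar C X = t_char C (t_lam C (t_one C) X (t_truth C (t_prod C (t_one C) X)))"

definition fAnd :: "('o, 'a, 'z) topos_sig_scheme \<Rightarrow> 'a \<Rightarrow> 'a \<Rightarrow> 'a" where
  "fAnd C \<phi> \<psi> = t_comp C (conj_ar C) (t_pair C \<phi> \<psi>)"

definition fImp :: "('o, 'a, 'z) topos_sig_scheme \<Rightarrow> 'a \<Rightarrow> 'a \<Rightarrow> 'a" where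
  "fImp C \<phi> \<psi> = t_comp C (imp_ar C) (t_pair C \<phi> \<psi>)"

definition fEq :: "('o, 'a, 'z) topos_sig_scheme \<Rightarrow> 'a \<Rightarrow> 'a \<Rightarrow> 'a" where
  "fEq C s t = t_comp C (eq_ar C (t_cod C s)) (t_pair C s t)"

text \<open>fAll C G X \<phi>: for \<phi> in context G, x:X, the formula \<forall>x:X. \<phi> in context G.\<close>
definition fAll :: "('o, 'a, 'z) topos_sig_scheme \<Rightarrow> 'o \<Rightarrow> 'o \<Rightarrow> 'a \<Rightarrow> 'a" where
  "fAll C G X \<phi> = t_comp C (all_ar C X) (t_lam C G X \<phi>)"

definition fApp :: "('o, 'a, 'z) topos_sig_scheme \<Rightarrow> 'o \<Rightarrow> 'a \<Rightarrow> 'a \<Rightarrow> 'a" where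
  "fApp C X a t = t_comp C (t_ev C X (t_Omega C)) (t_pair C a t)"

definition holds :: "('o, 'a, 'z) topos_sig_scheme \<Rightarrow> 'a \<Rightarrow> bool" where
  "holds C \<phi> \<longleftrightarrow> \<phi> = t_true C"

definition strong_loeb :: "('o, 'a, 'z) topos_sig_scheme \<Rightarrow> 'a \<Rightarrow> bool" where
  "strong_loeb C L \<longleftrightarrow>
     (let W = t_Omega C; p = t_pi2 C (t_one C) W in
      holds C (fAll C (t_one C) W (fImp C (fImp C (t_comp C L p) p) p)))"

definition contractive :: "('o, 'a, 'z) topos_sig_scheme \<Rightarrow> 'a \<Rightarrow> 'a \<Rightarrow> bool" where
  "contractive C L f \<longleftrightarrow>
     (let X = t_dom C f; G1 = t_prod C (t_one C) X;
          x = t_comp C (t_pi2 C (t_one C) X) (t_pi1 C G1 X); y = t_pi2 C G1 X in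
      holds C (fAll C (t_one C) X (fAll C G1 X
        (fImp C (t_comp C L (fEq C x y)) (fEq C (t_comp C f x) (t_comp C f y))))))"

definition nonexpansive :: "('o, 'a, 'z) topos_sig_scheme \<Rightarrow> 'a \<Rightarrow> bool" where
  "nonexpansive C f \<longleftrightarrow>
     (let X = t_dom C f; G1 = t_prod C (t_one C) X;
          x = t_comp C (t_pi2 C (t_one C) X) (t_pi1 C G1 X); y = t_pi2 C G1 X in
      holds C (fAll C (t_one C) X (fAll C G1 X
        (fImp C (fImp C (fEq C (t_comp C f x) (t_comp C f y)) (fEq C x y)) (fEq C x y)))))"

definition SubTe :: "('o, 'a, 'z) topos_sig_scheme \<Rightarrow> 'o \<Rightarrow> 'o \<Rightarrow> 'a \<Rightarrow> 'a" where
  "SubTe C G X a =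
     (let G1 = t_prod C G X;
          x = t_comp C (t_pi2 C G X) (t_pi1 C G1 X); y = t_pi2 C G1 X;
          a2 = t_comp C (t_comp C a (t_pi1 C G X)) (t_pi1 C G1 X) in
      fAll C G X (fAll C G1 X
        (fImp C (fAnd C (fApp C X a2 x) (fApp C X a2 y)) (fEq C x y))))"

definition SubsetF :: "('o, 'a, 'z) topos_sig_scheme \<Rightarrow> 'o \<Rightarrow> 'o \<Rightarrow> 'a \<Rightarrow> 'a \<Rightarrow> 'a" where
  "SubsetF C G X a b =
     (let x = t_pi2 C G X in
      fAll C G X (fImp C (fApp C X (t_comp C a (t_pi1 C G X)) x)
                          (fApp C X (t_comp C b (t_pi1 C G X)) x)))"

definition MaxST :: "('o, 'a, 'z) topos_sig_scheme \<Rightarrow> 'o \<Rightarrow> 'o \<Rightarrow> 'a \<Rightarrow> 'a" where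
  "MaxST C G X a =
     (let P = t_exp C X (t_Omega C); G1 = t_prod C G P;
          \<alpha> = t_pi2 C G P; a1 = t_comp C a (t_pi1 C G P) in
      fAnd C (SubTe C G X a)
        (fAll C G P (fImp C (fAnd C (SubTe C G1 X \<alpha>) (SubsetF C G1 X a1 \<alpha>))
                            (SubsetF C G1 X \<alpha> a1))))"

definition fixpred :: "('o, 'a, 'z) topos_sig_scheme \<Rightarrow> 'a \<Rightarrow> 'a" where
  "fixpred C f =
     (let X = t_dom C f; x = t_pi2 C (t_one C) X in
      t_lam C (t_one C) X (fEq C x (t_comp C f x)))"

end

theory Submission
  imports Defs
begin

locale topos =
  fixes C :: "('o,'a) topos_sig"
  assumes et: "elementary_topos C"
begin

abbreviation dm where "dm f \<equiv> t_dom C f"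
abbreviation cd where "cd f \<equiv> t_cod C f"
abbreviation cp (infixr "\<cdot>" 55) where "g \<cdot> f \<equiv> t_comp C g f"
abbreviation "Om \<equiv> t_Omega C"
abbreviation "T1 \<equiv> t_one C"
abbreviation "bg \<equiv> t_bang C"
abbreviation "pr \<equiv> t_prod C"
abbreviation "p1 \<equiv> t_pi1 C"
abbreviation "p2 \<equiv> t_pi2 C"
abbreviation "pa \<equiv> t_pair C"
abbreviation "tru \<equiv> t_true C"
abbreviation "tr \<equiv> t_truth C"
abbreviation "idt \<equiv> t_id C"
abbreviation "lam \<equiv> t_lam C"
abbreviation "ev \<equiv> t_ev C"
abbreviation "ex \<equiv> t_exp C"

lemma cat: "is_category C" and trm: "has_terminal C" and prd: "has_products C"
  and eqz: "has_equalizers C" and exs: "has_exponentials C" and soc: "has_subobject_classifier C"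
  using et unfolding elementary_topos_def by auto

lemma id_dom[simp]: "dm (idt A) = A" and id_cod[simp]: "cd (idt A) = A"
  using cat unfolding is_category_def by auto
lemma comp_dom[simp]: "cd f = dm g \<Longrightarrow> dm (g \<cdot> f) = dm f"
  and comp_cod[simp]: "cd f = dm g \<Longrightarrow> cd (g \<cdot> f) = cd g"
  using cat unfolding is_category_def by auto
lemma id_r[simp]: "dm f = A \<Longrightarrow> f \<cdot> idt A = f" and id_l[simp]: "cd f = A \<Longrightarrow> idt A \<cdot> f = f"
  using cat unfolding is_category_def by auto
lemma assoc[simp]: "cd f = dm g \<Longrightarrow> cd g = dm h \<Longrightarrow> (h \<cdot> g) \<cdot> f = h \<cdot> (g \<cdot> f)"
  using cat unfolding is_category_def by metis

lemma bg_dom[simp]: "dm (bg A) = A" and bg_cod[simp]: "cd (bg A) = T1"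
  using trm unfolding has_terminal_def by auto
lemma bg_uniq: "dm h = A \<Longrightarrow> cd h = T1 \<Longrightarrow> h = bg A"
  using trm unfolding has_terminal_def by auto
lemma bg_comp[simp]: "cd h = A \<Longrightarrow> bg A \<cdot> h = bg (dm h)"
  by (rule bg_uniq) auto
lemma bg_one: "bg T1 = idt T1" by (rule bg_uniq[symmetric]) auto

lemma p1_dom[simp]: "dm (p1 A B) = pr A B" and p1_cod[simp]: "cd (p1 A B) = A"
  and p2_dom[simp]: "dm (p2 A B) = pr A B" and p2_cod[simp]: "cd (p2 A B) = B"
  using prd unfolding has_products_def by auto
lemma pa_dom[simp]: "dm f = dm g \<Longrightarrow> dm (pa f g) = dm f"
  and pa_cod[simp]: "dm f = dm g \<Longrightarrow> cd (pa f g) = pr (cd f) (cd g)"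
  using prd unfolding has_products_def by auto
lemma p1_pa[simp]: "dm f = dm g \<Longrightarrow> cd f = A \<Longrightarrow> cd g = B \<Longrightarrow> p1 A B \<cdot> pa f g = f"
  and p2_pa[simp]: "dm f = dm g \<Longrightarrow> cd f = A \<Longrightarrow> cd g = B \<Longrightarrow> p2 A B \<cdot> pa f g = g"
  using prd unfolding has_products_def by auto
lemma pa_uniq: "dm f = dm g \<Longrightarrow> dm h = dm f \<Longrightarrow> cd h = pr (cd f) (cd g) \<Longrightarrow>
   p1 (cd f) (cd g) \<cdot> h = f \<Longrightarrow> p2 (cd f) (cd g) \<cdot> h = g \<Longrightarrow> h = pa f g"
  using prd unfolding has_products_def by blast

lemma p1_pa_c[simp]: "dm f = dm g \<Longrightarrow> cd f = A \<Longrightarrow> cd g = B \<Longrightarrow> cd h = dm f \<Longrightarrow> p1 A B \<cdot> (pa f g \<cdot> h) = f \<cdot> h"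
  by (simp flip: assoc)
lemma p2_pa_c[simp]: "dm f = dm g \<Longrightarrow> cd f = A \<Longrightarrow> cd g = B \<Longrightarrow> cd h = dm f \<Longrightarrow> p2 A B \<cdot> (pa f g \<cdot> h) = g \<cdot> h"
  by (simp flip: assoc)

lemma pa_comp[simp]: "dm f = dm g \<Longrightarrow> cd h = dm f \<Longrightarrow> pa f g \<cdot> h = pa (f \<cdot> h) (g \<cdot> h)"
proof -
  assume a: "dm f = dm g" "cd h = dm f"
  show ?thesis
    by (rule pa_uniq) (use a in \<open>simp_all flip: assoc\<close>)
qed

lemma pa_proj: "cd h = pr A B \<Longrightarrow> pa (p1 A B \<cdot> h) (p2 A B \<cdot> h) = h"
  by (rule pa_uniq[symmetric]) auto

lemma pa_inj: "dm f = dm g \<Longrightarrow> dm f' = dm g' \<Longrightarrow> cd f = cd f' \<Longrightarrow> cd g = cd g' \<Longrightarrow>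
   pa f g = pa f' g' \<Longrightarrow> f = f' \<and> g = g'"
  by (metis p1_pa p2_pa)

lemma ex_ev_dom[simp]: "dm (ev X Y) = pr (ex X Y) X" and ev_cod[simp]: "cd (ev X Y) = Y"
  using exs unfolding has_exponentials_def by auto
lemma lam_dom[simp]: "dm h = pr G X \<Longrightarrow> dm (lam G X h) = G"
  and lam_cod[simp]: "dm h = pr G X \<Longrightarrow> cd (lam G X h) = ex X (cd h)"
  using exs unfolding has_exponentials_def by auto
lemma ev_lam: "dm h = pr G X \<Longrightarrow> ev X (cd h) \<cdot> pa (lam G X h \<cdot> p1 G X) (p2 G X) = h"
  using exs unfolding has_exponentials_def by auto
lemma lam_uniq: "dm h = pr G X \<Longrightarrow> dm k = G \<Longrightarrow> cd k = ex X (cd h) \<Longrightarrow>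
   ev X (cd h) \<cdot> pa (k \<cdot> p1 G X) (p2 G X) = h \<Longrightarrow> k = lam G X h"
  using exs unfolding has_exponentials_def by auto

lemma beta[simp]: "dm \<phi> = pr G X \<Longrightarrow> cd h = G \<Longrightarrow> dm t = dm h \<Longrightarrow> cd t = X \<Longrightarrow> Y = cd \<phi> \<Longrightarrow>
   ev X Y \<cdot> pa (lam G X \<phi> \<cdot> h) t = \<phi> \<cdot> pa h t"
proof -
  assume a: "dm \<phi> = pr G X" "cd h = G" "dm t = dm h" "cd t = X" "Y = cd \<phi>"
  have "pa (lam G X \<phi> \<cdot> h) t = pa (lam G X \<phi> \<cdot> p1 G X) (p2 G X) \<cdot> pa h t"
    using a by simp
  hence "ev X Y \<cdot> pa (lam G X \<phi> \<cdot> h) t = (ev X Y \<cdot> pa (lam G X \<phi> \<cdot> p1 G X) (p2 G X)) \<cdot> pa h t"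
    using a by simp
  also have "\<dots> = \<phi> \<cdot> pa h t" using ev_lam[of \<phi> G X] a by simp
  finally show ?thesis .
qed

lemma lam_nat: "dm \<phi> = pr G X \<Longrightarrow> cd h = G \<Longrightarrow>
   lam G X \<phi> \<cdot> h = lam (dm h) X (\<phi> \<cdot> pa (h \<cdot> p1 (dm h) X) (p2 (dm h) X))"
  by (rule lam_uniq) auto

lemma lam_inj: "dm \<phi> = pr G X \<Longrightarrow> dm \<psi> = pr G X \<Longrightarrow> cd \<phi> = cd \<psi> \<Longrightarrow>
   lam G X \<phi> = lam G X \<psi> \<Longrightarrow> \<phi> = \<psi>"
  by (metis ev_lam)


lemma tru_dom[simp]: "dm tru = T1" and tru_cod[simp]: "cd tru = Om"
  using soc unfolding has_subobject_classifier_def by auto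
lemma tr_dom[simp]: "dm (tr G) = G" and tr_cod[simp]: "cd (tr G) = Om"
  unfolding t_truth_def by auto
lemma tr_comp[simp]: "cd h = G \<Longrightarrow> tr G \<cdot> h = tr (dm h)"
  unfolding t_truth_def by simp
lemma tr_one: "tr T1 = tru" unfolding t_truth_def bg_one by simp

lemma mono_one: "dm m = T1 \<Longrightarrow> is_mono C m"
  unfolding is_mono_def by (metis bg_uniq)

lemma char_spec: "is_mono C m \<Longrightarrow> dm (t_char C m) = cd m \<and> cd (t_char C m) = Om \<and>
    is_pullback C (t_char C m) tru m (bg (dm m))"
  unfolding t_char_def
  by (rule theI') (use soc in \<open>auto simp: has_subobject_classifier_def\<close>)
lemma char_uniq: "is_mono C m \<Longrightarrow> dm \<chi> = cd m \<Longrightarrow> cd \<chi> = Om \<Longrightarrow>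
   is_pullback C \<chi> tru m (bg (dm m)) \<Longrightarrow> t_char C m = \<chi>"
  unfolding t_char_def
  by (rule the1_equality) (use soc in \<open>auto simp: has_subobject_classifier_def\<close>)

lemma char_true: assumes m: "is_mono C m" and h: "cd h = cd m"
  shows "(t_char C m \<cdot> h = tr (dm h)) \<longleftrightarrow> (\<exists>u. dm u = dm h \<and> cd u = dm m \<and> m \<cdot> u = h)"
proof
  have sp: "dm (t_char C m) = cd m" "cd (t_char C m) = Om"
    "is_pullback C (t_char C m) tru m (bg (dm m))" using char_spec[OF m] by auto
  {
    assume "t_char C m \<cdot> h = tr (dm h)"
    hence "t_char C m \<cdot> h = tru \<cdot> bg (dm h)" unfolding t_truth_def .
    with sp(3) h sp(1) show "\<exists>u. dm u = dm h \<and> cd u = dm m \<and> m \<cdot> u = h"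
      unfolding is_pullback_def by (metis bg_cod bg_dom tru_dom)
  }
  {
    assume "\<exists>u. dm u = dm h \<and> cd u = dm m \<and> m \<cdot> u = h"
    then obtain u where u: "dm u = dm h" "cd u = dm m" "m \<cdot> u = h" by blast
    have "t_char C m \<cdot> h = (t_char C m \<cdot> m) \<cdot> u" using u sp by simp
    also have "t_char C m \<cdot> m = tr (dm m)" using sp(3) unfolding is_pullback_def t_truth_def by simp
    finally show "t_char C m \<cdot> h = tr (dm h)" using u by simp
  }
qed

lemma eqz_mono: "is_equalizer C e f g \<Longrightarrow> is_mono C e"
  unfolding is_mono_def is_equalizer_def
proof (intro allI impI)
  fix a b assume E: "t_dom C f = t_dom C g \<and> t_cod C f = t_cod C g \<and> t_cod C e = t_dom C f \<and>
     f \<cdot> e = g \<cdot> e \<and> (\<forall>h. t_cod C h = t_dom C f \<and> f \<cdot> h = g \<cdot> h \<longrightarrow>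
        (\<exists>!u. t_dom C u = t_dom C h \<and> t_cod C u = t_dom C e \<and> e \<cdot> u = h))"
    and ab: "cd a = dm e \<and> cd b = dm e \<and> dm a = dm b \<and> e \<cdot> a = e \<cdot> b"
  let ?k = "e \<cdot> a"
  have "cd ?k = dm f" using E ab by simp
  moreover have "f \<cdot> ?k = g \<cdot> ?k" using E ab by (metis assoc)
  ultimately have "\<exists>!u. dm u = dm ?k \<and> cd u = dm e \<and> e \<cdot> u = ?k" using E by blast
  moreover have "dm a = dm ?k" "dm b = dm ?k" "e \<cdot> b = ?k" using ab by auto
  ultimately show "a = b" using ab by (metis (no_types, lifting))
qed

lemma eqz_pullback: assumes E: "is_equalizer C e \<phi> (tr G)" and \<phi>: "dm \<phi> = G" "cd \<phi> = Om"
  and \<psi>: "dm \<psi> = G" "cd \<psi> = Om"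
  and same: "\<And>k. cd k = G \<Longrightarrow> (\<phi> \<cdot> k = tr (dm k)) \<longleftrightarrow> (\<psi> \<cdot> k = tr (dm k))"
  shows "is_pullback C \<psi> tru e (bg (dm e))"
proof -
  have E1: "cd e = G" "\<phi> \<cdot> e = tr G \<cdot> e" using E \<phi> unfolding is_equalizer_def by auto
  have E2: "\<And>h. cd h = G \<Longrightarrow> \<phi> \<cdot> h = tr G \<cdot> h \<Longrightarrow> (\<exists>!u. dm u = dm h \<and> cd u = dm e \<and> e \<cdot> u = h)"
    using E \<phi> unfolding is_equalizer_def by auto
  have "\<phi> \<cdot> e = tr (dm e)" using E1 by simp
  hence "\<psi> \<cdot> e = tr (dm e)" using same[of e] E1 by blast
  hence pe: "\<psi> \<cdot> e = tru \<cdot> bg (dm e)" unfolding t_truth_def .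
  show ?thesis unfolding is_pullback_def
  proof (intro conjI allI impI)
    fix p q assume pq: "dm p = dm q \<and> cd p = dm \<psi> \<and> cd q = dm tru \<and> \<psi> \<cdot> p = tru \<cdot> q"
    have q: "q = bg (dm p)" using pq bg_uniq by simp
    have "\<psi> \<cdot> p = tr (dm p)" using pq q unfolding t_truth_def by simp
    hence "\<phi> \<cdot> p = tr G \<cdot> p" using same[of p] pq \<psi> by simp
    moreover have "cd p = G" using pq \<psi> by simp
    ultimately have "\<exists>!u. dm u = dm p \<and> cd u = dm e \<and> e \<cdot> u = p" by (rule E2[rotated])
    then obtain u where u: "dm u = dm p" "cd u = dm e" "e \<cdot> u = p"
      and uu: "\<And>v. dm v = dm p \<and> cd v = dm e \<and> e \<cdot> v = p \<Longrightarrow> v = u" by metis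
    have "bg (dm e) \<cdot> u = q" using u q by simp
    then show "\<exists>!u. dm u = dm p \<and> cd u = dm e \<and> e \<cdot> u = p \<and> bg (dm e) \<cdot> u = q"
      using u uu by (intro ex1I[of _ u]) blast+
  next
    show "cd \<psi> = cd tru" using \<psi> by simp
    show "dm e = dm (bg (dm e))" by simp
    show "cd e = dm \<psi>" using E1 \<psi> by simp
    show "cd (bg (dm e)) = dm tru" by simp
    show "\<psi> \<cdot> e = tru \<cdot> bg (dm e)" by (rule pe)
  qed
qed

lemma omega_ext: assumes "dm \<phi> = G" "cd \<phi> = Om" "dm \<psi> = G" "cd \<psi> = Om"
  and same: "\<And>k. cd k = G \<Longrightarrow> (\<phi> \<cdot> k = tr (dm k)) \<longleftrightarrow> (\<psi> \<cdot> k = tr (dm k))"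
  shows "\<phi> = \<psi>"
proof -
  obtain e where E: "is_equalizer C e \<phi> (tr G)"
    using eqz assms unfolding has_equalizers_def by (metis tr_cod tr_dom)
  have m: "is_mono C e" by (rule eqz_mono[OF E])
  have cde: "cd e = G" using E assms unfolding is_equalizer_def by auto
  have "t_char C e = \<phi>"
    by (rule char_uniq[OF m]) (use assms cde eqz_pullback[OF E, of \<phi>] in simp_all)
  moreover have "t_char C e = \<psi>"
    by (rule char_uniq[OF m]) (use assms cde same eqz_pullback[OF E, of \<psi>] in simp_all)
  ultimately show ?thesis by simp
qed


abbreviation "m0 \<equiv> pa tru tru"
lemma conj_typ[simp]: "dm (conj_ar C) = pr Om Om" "cd (conj_ar C) = Om"
  using char_spec[OF mono_one[of m0]] unfolding conj_ar_def by auto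

lemma fAnd_dom[simp]: "dm \<phi> = dm \<psi> \<Longrightarrow> cd \<phi> = Om \<Longrightarrow> cd \<psi> = Om \<Longrightarrow> dm (fAnd C \<phi> \<psi>) = dm \<phi>"
  and fAnd_cod[simp]: "dm \<phi> = dm \<psi> \<Longrightarrow> cd \<phi> = Om \<Longrightarrow> cd \<psi> = Om \<Longrightarrow> cd (fAnd C \<phi> \<psi>) = Om"
  unfolding fAnd_def by auto
lemma fAnd_comp[simp]: "dm \<phi> = dm \<psi> \<Longrightarrow> cd \<phi> = Om \<Longrightarrow> cd \<psi> = Om \<Longrightarrow> cd h = dm \<phi> \<Longrightarrow>
  fAnd C \<phi> \<psi> \<cdot> h = fAnd C (\<phi> \<cdot> h) (\<psi> \<cdot> h)"
  unfolding fAnd_def by simp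
lemma fAnd_true: assumes "dm \<phi> = dm \<psi>" "cd \<phi> = Om" "cd \<psi> = Om"
  shows "fAnd C \<phi> \<psi> = tr (dm \<phi>) \<longleftrightarrow> \<phi> = tr (dm \<phi>) \<and> \<psi> = tr (dm \<phi>)"
proof -
  have "fAnd C \<phi> \<psi> = tr (dm \<phi>) \<longleftrightarrow> (\<exists>u. dm u = dm \<phi> \<and> cd u = T1 \<and> m0 \<cdot> u = pa \<phi> \<psi>)"
    using char_true[OF mono_one[of m0], of "pa \<phi> \<psi>"] assms unfolding fAnd_def conj_ar_def by simp
  also have "\<dots> \<longleftrightarrow> pa (tr (dm \<phi>)) (tr (dm \<phi>)) = pa \<phi> \<psi>"
  proof
    assume "\<exists>u. dm u = dm \<phi> \<and> cd u = T1 \<and> m0 \<cdot> u = pa \<phi> \<psi>"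
    then obtain u where u: "dm u = dm \<phi>" "cd u = T1" "m0 \<cdot> u = pa \<phi> \<psi>" by blast
    hence "u = bg (dm \<phi>)" using bg_uniq[of u "dm \<phi>"] by blast
    with u show "pa (tr (dm \<phi>)) (tr (dm \<phi>)) = pa \<phi> \<psi>" unfolding t_truth_def by simp
  next
    assume "pa (tr (dm \<phi>)) (tr (dm \<phi>)) = pa \<phi> \<psi>"
    thus "\<exists>u. dm u = dm \<phi> \<and> cd u = T1 \<and> m0 \<cdot> u = pa \<phi> \<psi>"
      by (intro exI[of _ "bg (dm \<phi>)"]) (simp add: t_truth_def)
  qed
  also have "\<dots> \<longleftrightarrow> \<phi> = tr (dm \<phi>) \<and> \<psi> = tr (dm \<phi>)"
    using pa_inj[of "tr (dm \<phi>)" "tr (dm \<phi>)" \<phi> \<psi>] assms by auto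
  finally show ?thesis .
qed

lemma diag_mono: "is_mono C (pa (idt X) (idt X))"
  unfolding is_mono_def
proof (intro allI impI)
  fix g h assume a: "cd g = dm (pa (idt X) (idt X)) \<and> cd h = dm (pa (idt X) (idt X)) \<and> dm g = dm h \<and>
     pa (idt X) (idt X) \<cdot> g = pa (idt X) (idt X) \<cdot> h"
  have cg: "cd g = X" "cd h = X" using a by auto
  have "pa g g = pa (idt X) (idt X) \<cdot> g" using cg by simp
  moreover have "pa h h = pa (idt X) (idt X) \<cdot> h" using cg by simp
  ultimately have e: "pa g g = pa h h" using a by argo
  have "dm g = dm h" using a by blast
  thus "g = h" using pa_inj[OF _ _ _ _ e] cg by simp
qed

lemma eq_typ[simp]: "dm (eq_ar C X) = pr X X" "cd (eq_ar C X) = Om"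
  using char_spec[OF diag_mono[of X]] unfolding eq_ar_def by auto

lemma fEq_dom[simp]: "dm s = dm t \<Longrightarrow> cd s = cd t \<Longrightarrow> dm (fEq C s t) = dm s"
  and fEq_cod[simp]: "dm s = dm t \<Longrightarrow> cd s = cd t \<Longrightarrow> cd (fEq C s t) = Om"
  unfolding fEq_def by auto
lemma fEq_comp[simp]: "dm s = dm t \<Longrightarrow> cd s = cd t \<Longrightarrow> cd h = dm s \<Longrightarrow>
  fEq C s t \<cdot> h = fEq C (s \<cdot> h) (t \<cdot> h)"
  unfolding fEq_def by simp
lemma fEq_true: assumes "dm s = dm t" "cd s = cd t"
  shows "fEq C s t = tr (dm s) \<longleftrightarrow> s = t"
proof -
  let ?m = "pa (idt (cd s)) (idt (cd s))"
  have "fEq C s t = tr (dm s) \<longleftrightarrow> (\<exists>u. dm u = dm s \<and> cd u = cd s \<and> ?m \<cdot> u = pa s t)"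
    using char_true[OF diag_mono[of "cd s"], of "pa s t"] assms unfolding fEq_def eq_ar_def by simp
  also have "\<dots> \<longleftrightarrow> s = t"
  proof
    assume "\<exists>u. dm u = dm s \<and> cd u = cd s \<and> ?m \<cdot> u = pa s t"
    then obtain u where u: "dm u = dm s" "cd u = cd s" "?m \<cdot> u = pa s t" by blast
    hence "pa u u = pa s t" by simp
    thus "s = t" using pa_inj[of u u s t] u assms by (metis id_dom)
  qed (use assms in auto)
  finally show ?thesis .
qed

definition "e0 = (SOME e. is_equalizer C e (conj_ar C) (p1 Om Om))"
lemma e0: "is_equalizer C e0 (conj_ar C) (p1 Om Om)"
proof -
  have "\<exists>e. is_equalizer C e (conj_ar C) (p1 Om Om)"
    using eqz unfolding has_equalizers_def by simp
  thus ?thesis unfolding e0_def by (rule someI_ex)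
qed
lemma e0_cod: "cd e0 = pr Om Om" using e0 unfolding is_equalizer_def by simp
lemma imp_typ[simp]: "dm (imp_ar C) = pr Om Om" "cd (imp_ar C) = Om"
  using char_spec[OF eqz_mono[OF e0]] e0_cod unfolding imp_ar_def e0_def[symmetric] by auto

lemma fImp_dom[simp]: "dm \<phi> = dm \<psi> \<Longrightarrow> cd \<phi> = Om \<Longrightarrow> cd \<psi> = Om \<Longrightarrow> dm (fImp C \<phi> \<psi>) = dm \<phi>"
  and fImp_cod[simp]: "dm \<phi> = dm \<psi> \<Longrightarrow> cd \<phi> = Om \<Longrightarrow> cd \<psi> = Om \<Longrightarrow> cd (fImp C \<phi> \<psi>) = Om"
  unfolding fImp_def by auto
lemma fImp_comp[simp]: "dm \<phi> = dm \<psi> \<Longrightarrow> cd \<phi> = Om \<Longrightarrow> cd \<psi> = Om \<Longrightarrow> cd h = dm \<phi> \<Longrightarrow>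
  fImp C \<phi> \<psi> \<cdot> h = fImp C (\<phi> \<cdot> h) (\<psi> \<cdot> h)"
  unfolding fImp_def by simp

lemma fImp_true0: assumes a: "dm \<phi> = dm \<psi>" "cd \<phi> = Om" "cd \<psi> = Om"
  shows "fImp C \<phi> \<psi> = tr (dm \<phi>) \<longleftrightarrow> fAnd C \<phi> \<psi> = \<phi>"
proof -
  have E: "dm (conj_ar C) = dm (p1 Om Om)" "cd e0 = dm (conj_ar C)"
    "conj_ar C \<cdot> e0 = p1 Om Om \<cdot> e0"
    "\<And>h. cd h = dm (conj_ar C) \<Longrightarrow> conj_ar C \<cdot> h = p1 Om Om \<cdot> h \<Longrightarrow>
        (\<exists>!u. dm u = dm h \<and> cd u = dm e0 \<and> e0 \<cdot> u = h)"
    using e0 unfolding is_equalizer_def by auto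
  have "fImp C \<phi> \<psi> = tr (dm \<phi>) \<longleftrightarrow> (\<exists>u. dm u = dm \<phi> \<and> cd u = dm e0 \<and> e0 \<cdot> u = pa \<phi> \<psi>)"
    using char_true[OF eqz_mono[OF e0], of "pa \<phi> \<psi>"] a e0_cod
    unfolding fImp_def imp_ar_def e0_def[symmetric] by simp
  also have "\<dots> \<longleftrightarrow> conj_ar C \<cdot> pa \<phi> \<psi> = p1 Om Om \<cdot> pa \<phi> \<psi>"
  proof
    assume "\<exists>u. dm u = dm \<phi> \<and> cd u = dm e0 \<and> e0 \<cdot> u = pa \<phi> \<psi>"
    then obtain u where u: "dm u = dm \<phi>" "cd u = dm e0" "e0 \<cdot> u = pa \<phi> \<psi>" by blast
    have "(conj_ar C \<cdot> e0) \<cdot> u = (p1 Om Om \<cdot> e0) \<cdot> u" using E(3) by argo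
    hence "conj_ar C \<cdot> (e0 \<cdot> u) = p1 Om Om \<cdot> (e0 \<cdot> u)"
      using u E(2) e0_cod by simp
    thus "conj_ar C \<cdot> pa \<phi> \<psi> = p1 Om Om \<cdot> pa \<phi> \<psi>" using u by simp
  next
    assume "conj_ar C \<cdot> pa \<phi> \<psi> = p1 Om Om \<cdot> pa \<phi> \<psi>"
    moreover have "cd (pa \<phi> \<psi>) = dm (conj_ar C)" using a by simp
    ultimately have "\<exists>!u. dm u = dm (pa \<phi> \<psi>) \<and> cd u = dm e0 \<and> e0 \<cdot> u = pa \<phi> \<psi>"
      using E(4) by blast
    hence "\<exists>u. dm u = dm (pa \<phi> \<psi>) \<and> cd u = dm e0 \<and> e0 \<cdot> u = pa \<phi> \<psi>" by (rule ex1_implies_ex)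
    thus "\<exists>u. dm u = dm \<phi> \<and> cd u = dm e0 \<and> e0 \<cdot> u = pa \<phi> \<psi>" using a by simp
  qed
  also have "\<dots> \<longleftrightarrow> fAnd C \<phi> \<psi> = \<phi>" using a unfolding fAnd_def by simp
  finally show ?thesis .
qed

lemma fImp_valid: assumes a: "dm \<phi> = dm \<psi>" "cd \<phi> = Om" "cd \<psi> = Om"
  shows "fImp C \<phi> \<psi> = tr (dm \<phi>) \<longleftrightarrow>
    (\<forall>k. cd k = dm \<phi> \<longrightarrow> \<phi> \<cdot> k = tr (dm k) \<longrightarrow> \<psi> \<cdot> k = tr (dm k))"
proof -
  have "fAnd C \<phi> \<psi> = \<phi> \<longleftrightarrow> (\<forall>k. cd k = dm \<phi> \<longrightarrow> \<phi> \<cdot> k = tr (dm k) \<longrightarrow> \<psi> \<cdot> k = tr (dm k))"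
  proof
    assume e: "fAnd C \<phi> \<psi> = \<phi>"
    show "\<forall>k. cd k = dm \<phi> \<longrightarrow> \<phi> \<cdot> k = tr (dm k) \<longrightarrow> \<psi> \<cdot> k = tr (dm k)"
    proof (intro allI impI)
      fix k assume k: "cd k = dm \<phi>" "\<phi> \<cdot> k = tr (dm k)"
      have "fAnd C (\<phi> \<cdot> k) (\<psi> \<cdot> k) = fAnd C \<phi> \<psi> \<cdot> k" using a k by simp
      also have "\<dots> = tr (dm k)" using e k by simp
      finally show "\<psi> \<cdot> k = tr (dm k)" using fAnd_true[of "\<phi> \<cdot> k" "\<psi> \<cdot> k"] a k by simp
    qed
  next
    assume h: "\<forall>k. cd k = dm \<phi> \<longrightarrow> \<phi> \<cdot> k = tr (dm k) \<longrightarrow> \<psi> \<cdot> k = tr (dm k)"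
    show "fAnd C \<phi> \<psi> = \<phi>"
    proof (rule omega_ext[of _ "dm \<phi>"])
      fix k assume k: "cd k = dm \<phi>"
      have "fAnd C \<phi> \<psi> \<cdot> k = fAnd C (\<phi> \<cdot> k) (\<psi> \<cdot> k)" using a k by simp
      thus "(fAnd C \<phi> \<psi> \<cdot> k = tr (dm k)) = (\<phi> \<cdot> k = tr (dm k))"
        using fAnd_true[of "\<phi> \<cdot> k" "\<psi> \<cdot> k"] a k h by auto
    qed (use a in auto)
  qed
  thus ?thesis using fImp_true0[OF a] by simp
qed

abbreviation "m1 X \<equiv> lam T1 X (tr (pr T1 X))"
lemma all_typ[simp]: "dm (all_ar C X) = ex X Om" "cd (all_ar C X) = Om"
  using char_spec[OF mono_one[of "m1 X"]] unfolding all_ar_def by auto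

lemma fAll_dom[simp]: "dm \<phi> = pr G X \<Longrightarrow> cd \<phi> = Om \<Longrightarrow> dm (fAll C G X \<phi>) = G"
  and fAll_cod[simp]: "dm \<phi> = pr G X \<Longrightarrow> cd \<phi> = Om \<Longrightarrow> cd (fAll C G X \<phi>) = Om"
  unfolding fAll_def by auto
lemma fAll_comp[simp]: "dm \<phi> = pr G X \<Longrightarrow> cd \<phi> = Om \<Longrightarrow> cd h = G \<Longrightarrow>
  fAll C G X \<phi> \<cdot> h = fAll C (dm h) X (\<phi> \<cdot> pa (h \<cdot> p1 (dm h) X) (p2 (dm h) X))"
  unfolding fAll_def by (simp add: lam_nat)

lemma fAll_true: assumes a: "dm \<phi> = pr G X" "cd \<phi> = Om"
  shows "fAll C G X \<phi> = tr G \<longleftrightarrow> \<phi> = tr (pr G X)"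
proof -
  have mb: "m1 X \<cdot> bg G = lam G X (tr (pr G X))" by (simp add: lam_nat)
  have "fAll C G X \<phi> = tr G \<longleftrightarrow> (\<exists>u. dm u = G \<and> cd u = T1 \<and> m1 X \<cdot> u = lam G X \<phi>)"
    using char_true[OF mono_one[of "m1 X"], of "lam G X \<phi>"] a unfolding fAll_def all_ar_def by simp
  also have "\<dots> \<longleftrightarrow> lam G X (tr (pr G X)) = lam G X \<phi>"
    using mb bg_uniq by (metis bg_cod bg_dom)
  also have "\<dots> \<longleftrightarrow> \<phi> = tr (pr G X)"
    using lam_inj[of \<phi> G X "tr (pr G X)"] a by auto
  finally show ?thesis .
qed


lemma fApp_dom[simp]: "dm a = dm t \<Longrightarrow> cd a = ex X Om \<Longrightarrow> cd t = X \<Longrightarrow> dm (fApp C X a t) = dm a"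
  and fApp_cod[simp]: "dm a = dm t \<Longrightarrow> cd a = ex X Om \<Longrightarrow> cd t = X \<Longrightarrow> cd (fApp C X a t) = Om"
  unfolding fApp_def by auto
lemma fApp_comp[simp]: "dm a = dm t \<Longrightarrow> cd a = ex X Om \<Longrightarrow> cd t = X \<Longrightarrow> cd h = dm a \<Longrightarrow>
  fApp C X a t \<cdot> h = fApp C X (a \<cdot> h) (t \<cdot> h)"
  unfolding fApp_def by simp

lemma valid_comp: "\<phi> = tr G \<Longrightarrow> cd h = G \<Longrightarrow> \<phi> \<cdot> h = tr (dm h)" by simp

lemma SubsetF_comp: "dm a = G \<Longrightarrow> dm b = G \<Longrightarrow> cd a = ex X Om \<Longrightarrow> cd b = ex X Om \<Longrightarrow> cd k = G \<Longrightarrow>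
  SubsetF C G X a b \<cdot> k = SubsetF C (dm k) X (a \<cdot> k) (b \<cdot> k)"
  unfolding SubsetF_def Let_def by simp

lemma SubTe_comp: "dm a = G \<Longrightarrow> cd a = ex X Om \<Longrightarrow> cd k = G \<Longrightarrow>
  SubTe C G X a \<cdot> k = SubTe C (dm k) X (a \<cdot> k)"
  unfolding SubTe_def Let_def by simp


lemma SubsetF_intro: assumes ty: "dm a = G" "dm b = G" "cd a = ex X Om" "cd b = ex X Om"
  and H: "\<And>h s. cd h = G \<Longrightarrow> dm s = dm h \<Longrightarrow> cd s = X \<Longrightarrow>
     fApp C X (a \<cdot> h) s = tr (dm h) \<Longrightarrow> fApp C X (b \<cdot> h) s = tr (dm h)"
  shows "SubsetF C G X a b = tr G"
proof -
  let ?\<phi> = "fApp C X (a \<cdot> p1 G X) (p2 G X)" and ?\<psi> = "fApp C X (b \<cdot> p1 G X) (p2 G X)"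
  have t: "dm ?\<phi> = pr G X" "dm ?\<psi> = pr G X" "cd ?\<phi> = Om" "cd ?\<psi> = Om" using ty by auto
  have "fImp C ?\<phi> ?\<psi> = tr (dm ?\<phi>)"
    unfolding fImp_valid[OF t(1)[folded t(2)] t(3) t(4)]
  proof (intro allI impI)
    fix r assume r: "cd r = dm ?\<phi>" "?\<phi> \<cdot> r = tr (dm r)"
    let ?h = "p1 G X \<cdot> r" and ?s = "p2 G X \<cdot> r"
    have "?\<phi> \<cdot> r = fApp C X (a \<cdot> ?h) ?s" "?\<psi> \<cdot> r = fApp C X (b \<cdot> ?h) ?s" using r ty by simp_all
    moreover have "dm ?h = dm r" "cd ?h = G" "dm ?s = dm ?h" "cd ?s = X" using r ty by simp_all
    ultimately show "?\<psi> \<cdot> r = tr (dm r)" using H[of ?h ?s] r by simp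
  qed
  hence "fImp C ?\<phi> ?\<psi> = tr (pr G X)" using t by simp
  thus ?thesis unfolding SubsetF_def Let_def using fAll_true[of "fImp C ?\<phi> ?\<psi>" G X] t by simp
qed

lemma SubsetF_elim: assumes ty: "dm a = G" "dm b = G" "cd a = ex X Om" "cd b = ex X Om"
  and V: "SubsetF C G X a b = tr G"
  and hs: "cd h = G" "dm s = dm h" "cd s = X" "fApp C X (a \<cdot> h) s = tr (dm h)"
  shows "fApp C X (b \<cdot> h) s = tr (dm h)"
proof -
  let ?\<phi> = "fApp C X (a \<cdot> p1 G X) (p2 G X)" and ?\<psi> = "fApp C X (b \<cdot> p1 G X) (p2 G X)"
  have t: "dm ?\<phi> = pr G X" "dm ?\<psi> = pr G X" "cd ?\<phi> = Om" "cd ?\<psi> = Om" using ty by auto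
  have "fImp C ?\<phi> ?\<psi> = tr (pr G X)"
    using V fAll_true[of "fImp C ?\<phi> ?\<psi>" G X] t unfolding SubsetF_def Let_def by simp
  hence "fImp C ?\<phi> ?\<psi> \<cdot> pa h s = tr (dm h)" using hs by simp
  moreover have "fImp C ?\<phi> ?\<psi> \<cdot> pa h s = fImp C (fApp C X (a \<cdot> h) s) (fApp C X (b \<cdot> h) s)"
    using hs ty by simp
  ultimately have I: "fImp C (fApp C X (a \<cdot> h) s) (fApp C X (b \<cdot> h) s) = tr (dm h)" by simp
  have t2: "dm (fApp C X (a \<cdot> h) s) = dm (fApp C X (b \<cdot> h) s)" "cd (fApp C X (a \<cdot> h) s) = Om"
     "cd (fApp C X (b \<cdot> h) s) = Om" "dm (fApp C X (a \<cdot> h) s) = dm h" using hs ty by simp_all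
  show ?thesis using I[unfolded t2(4)[symmetric], unfolded fImp_valid[OF t2(1-3)]] t2 hs
    by (metis id_cod id_dom id_r)
qed

lemma SubTe_intro: assumes ty: "dm a = G" "cd a = ex X Om"
  and H: "\<And>h s t. cd h = G \<Longrightarrow> dm s = dm h \<Longrightarrow> dm t = dm h \<Longrightarrow> cd s = X \<Longrightarrow> cd t = X \<Longrightarrow>
     fApp C X (a \<cdot> h) s = tr (dm h) \<Longrightarrow> fApp C X (a \<cdot> h) t = tr (dm h) \<Longrightarrow> s = t"
  shows "SubTe C G X a = tr G"
proof -
  let ?G1 = "pr G X"
  let ?x = "p2 G X \<cdot> p1 ?G1 X" and ?y = "p2 ?G1 X" and ?a2 = "(a \<cdot> p1 G X) \<cdot> p1 ?G1 X"
  let ?\<phi> = "fAnd C (fApp C X ?a2 ?x) (fApp C X ?a2 ?y)" and ?\<psi> = "fEq C ?x ?y"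
  have t: "dm ?\<phi> = pr ?G1 X" "dm ?\<psi> = pr ?G1 X" "cd ?\<phi> = Om" "cd ?\<psi> = Om" using ty by auto
  have "fImp C ?\<phi> ?\<psi> = tr (dm ?\<phi>)"
    unfolding fImp_valid[OF t(1)[folded t(2)] t(3) t(4)]
  proof (intro allI impI)
    fix r assume r: "cd r = dm ?\<phi>" "?\<phi> \<cdot> r = tr (dm r)"
    let ?h = "p1 G X \<cdot> (p1 ?G1 X \<cdot> r)" and ?s = "p2 G X \<cdot> (p1 ?G1 X \<cdot> r)" and ?t = "p2 ?G1 X \<cdot> r"
    have e: "?\<phi> \<cdot> r = fAnd C (fApp C X (a \<cdot> ?h) ?s) (fApp C X (a \<cdot> ?h) ?t)" "?\<psi> \<cdot> r = fEq C ?s ?t"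
      using r ty by simp_all
    have d: "dm ?h = dm r" "cd ?h = G" "dm ?s = dm ?h" "dm ?t = dm ?h" "cd ?s = X" "cd ?t = X"
      using r ty by simp_all
    have "fAnd C (fApp C X (a \<cdot> ?h) ?s) (fApp C X (a \<cdot> ?h) ?t) = tr (dm r)" using e r by simp
    hence "fApp C X (a \<cdot> ?h) ?s = tr (dm ?h) \<and> fApp C X (a \<cdot> ?h) ?t = tr (dm ?h)"
      using fAnd_true[of "fApp C X (a \<cdot> ?h) ?s" "fApp C X (a \<cdot> ?h) ?t"] d ty by simp
    hence "?s = ?t" using H[of ?h ?s ?t] d by blast
    thus "?\<psi> \<cdot> r = tr (dm r)" using e d fEq_true[of ?s ?t] by simp
  qed
  hence "fImp C ?\<phi> ?\<psi> = tr (pr ?G1 X)" using t by simp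
  hence "fAll C ?G1 X (fImp C ?\<phi> ?\<psi>) = tr ?G1" using fAll_true[of "fImp C ?\<phi> ?\<psi>" ?G1 X] t by simp
  thus ?thesis unfolding SubTe_def Let_def using fAll_true[of "fAll C ?G1 X (fImp C ?\<phi> ?\<psi>)" G X] t by simp
qed

lemma SubTe_elim: assumes ty: "dm a = G" "cd a = ex X Om"
  and V: "SubTe C G X a = tr G"
  and hs: "cd h = G" "dm s = dm h" "dm t = dm h" "cd s = X" "cd t = X"
     "fApp C X (a \<cdot> h) s = tr (dm h)" "fApp C X (a \<cdot> h) t = tr (dm h)"
  shows "s = t"
proof -
  let ?G1 = "pr G X"
  let ?x = "p2 G X \<cdot> p1 ?G1 X" and ?y = "p2 ?G1 X" and ?a2 = "(a \<cdot> p1 G X) \<cdot> p1 ?G1 X"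
  let ?\<phi> = "fAnd C (fApp C X ?a2 ?x) (fApp C X ?a2 ?y)" and ?\<psi> = "fEq C ?x ?y"
  have t: "dm ?\<phi> = pr ?G1 X" "dm ?\<psi> = pr ?G1 X" "cd ?\<phi> = Om" "cd ?\<psi> = Om" using ty by auto
  have "fAll C ?G1 X (fImp C ?\<phi> ?\<psi>) = tr ?G1"
    using V fAll_true[of "fAll C ?G1 X (fImp C ?\<phi> ?\<psi>)" G X] t unfolding SubTe_def Let_def by simp
  hence "fImp C ?\<phi> ?\<psi> = tr (pr ?G1 X)" using fAll_true[of "fImp C ?\<phi> ?\<psi>" ?G1 X] t by simp
  hence "fImp C ?\<phi> ?\<psi> \<cdot> pa (pa h s) t = tr (dm h)" using hs by simp
  moreover have "fImp C ?\<phi> ?\<psi> \<cdot> pa (pa h s) t =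
     fImp C (fAnd C (fApp C X (a \<cdot> h) s) (fApp C X (a \<cdot> h) t)) (fEq C s t)"
    using hs ty by simp
  ultimately have I: "fImp C (fAnd C (fApp C X (a \<cdot> h) s) (fApp C X (a \<cdot> h) t)) (fEq C s t) = tr (dm h)" by simp
  have t2: "dm (fAnd C (fApp C X (a \<cdot> h) s) (fApp C X (a \<cdot> h) t)) = dm (fEq C s t)"
     "cd (fAnd C (fApp C X (a \<cdot> h) s) (fApp C X (a \<cdot> h) t)) = Om" "cd (fEq C s t) = Om"
     "dm (fAnd C (fApp C X (a \<cdot> h) s) (fApp C X (a \<cdot> h) t)) = dm h" using hs ty by simp_all
  have A: "fAnd C (fApp C X (a \<cdot> h) s) (fApp C X (a \<cdot> h) t) = tr (dm h)"
    using fAnd_true[of "fApp C X (a \<cdot> h) s" "fApp C X (a \<cdot> h) t"] hs ty by simp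
  have "fEq C s t = tr (dm h)"
    using I[unfolded t2(4)[symmetric], unfolded fImp_valid[OF t2(1-3)]] t2 hs A
    by (metis id_cod id_dom id_r)
  thus ?thesis using fEq_true[of s t] hs by simp
qed


lemma holds_tr: "holds C \<phi> \<longleftrightarrow> \<phi> = tr T1" unfolding holds_def tr_one ..

lemma loeb: assumes L: "dm L = Om" "cd L = Om" and SL: "strong_loeb C L"
  and q: "dm q = D" "cd q = Om" and H: "fImp C (L \<cdot> q) q = tr D"
  shows "q = tr D"
proof -
  let ?p = "p2 T1 Om"
  let ?\<Lambda> = "fImp C (fImp C (L \<cdot> ?p) ?p) ?p"
  have t: "dm ?\<Lambda> = pr T1 Om" "cd ?\<Lambda> = Om" using L by simp_all
  have "fAll C T1 Om ?\<Lambda> = tr T1" using SL unfolding strong_loeb_def Let_def holds_tr .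
  hence "?\<Lambda> = tr (pr T1 Om)" using fAll_true[OF t] by simp
  hence "?\<Lambda> \<cdot> pa (bg D) q = tr D" using q by simp
  moreover have "?\<Lambda> \<cdot> pa (bg D) q = fImp C (fImp C (L \<cdot> q) q) q" using q L by simp
  ultimately have I: "fImp C (fImp C (L \<cdot> q) q) q = tr D" by simp
  have t2: "dm (fImp C (L \<cdot> q) q) = dm q" "cd (fImp C (L \<cdot> q) q) = Om" "dm (fImp C (L \<cdot> q) q) = D"
    using q L by simp_all
  show ?thesis
    using I[unfolded t2(3)[symmetric], unfolded fImp_valid[OF t2(1,2) q(2)]] t2 q H
    by (metis id_cod id_dom id_r)
qed

lemma contr: assumes L: "dm L = Om" "cd L = Om" and f: "dm f = X" "cd f = X"
  and CF: "contractive C L f"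
  and ab: "dm a = D" "dm b = D" "cd a = X" "cd b = X" and H: "L \<cdot> fEq C a b = tr D"
  shows "f \<cdot> a = f \<cdot> b"
proof -
  let ?G1 = "pr T1 X"
  let ?x = "p2 T1 X \<cdot> p1 ?G1 X" and ?y = "p2 ?G1 X"
  let ?\<Phi> = "fImp C (L \<cdot> fEq C ?x ?y) (fEq C (f \<cdot> ?x) (f \<cdot> ?y))"
  have t: "dm ?\<Phi> = pr ?G1 X" "cd ?\<Phi> = Om" using L f by simp_all
  have "fAll C T1 X (fAll C ?G1 X ?\<Phi>) = tr T1"
    using CF f unfolding contractive_def Let_def holds_tr by simp
  hence "fAll C ?G1 X ?\<Phi> = tr ?G1" using fAll_true[of "fAll C ?G1 X ?\<Phi>" T1 X] t by simp
  hence "?\<Phi> = tr (pr ?G1 X)" using fAll_true[OF t] by simp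
  hence "?\<Phi> \<cdot> pa (pa (bg D) a) b = tr D" using ab by simp
  moreover have "?\<Phi> \<cdot> pa (pa (bg D) a) b = fImp C (L \<cdot> fEq C a b) (fEq C (f \<cdot> a) (f \<cdot> b))"
    using ab L f by simp
  ultimately have I: "fImp C (L \<cdot> fEq C a b) (fEq C (f \<cdot> a) (f \<cdot> b)) = tr D" by simp
  have t2: "dm (L \<cdot> fEq C a b) = dm (fEq C (f \<cdot> a) (f \<cdot> b))" "cd (L \<cdot> fEq C a b) = Om"
    "cd (fEq C (f \<cdot> a) (f \<cdot> b)) = Om" "dm (L \<cdot> fEq C a b) = D" using ab L f by simp_all
  have "fEq C (f \<cdot> a) (f \<cdot> b) = tr D"
    using I[unfolded t2(4)[symmetric], unfolded fImp_valid[OF t2(1-3)]] t2 H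
    by (metis id_cod id_dom id_r)
  thus ?thesis using fEq_true[of "f \<cdot> a" "f \<cdot> b"] ab f by simp
qed

lemma core: assumes L: "dm L = Om" "cd L = Om" "strong_loeb C L" and f: "dm f = X" "cd f = X"
  and CF: "contractive C L f"
  and ab: "dm a = D" "dm b = D" "cd a = X" "cd b = X"
  and H: "\<And>j. cd j = D \<Longrightarrow> f \<cdot> (a \<cdot> j) = f \<cdot> (b \<cdot> j) \<Longrightarrow> a \<cdot> j = b \<cdot> j"
  shows "a = b"
proof -
  let ?q = "fEq C a b"
  have t: "dm (L \<cdot> ?q) = dm ?q" "cd (L \<cdot> ?q) = Om" "cd ?q = Om" "dm ?q = D" using ab L by simp_all
  have "fImp C (L \<cdot> ?q) ?q = tr (dm (L \<cdot> ?q))"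
    unfolding fImp_valid[OF t(1-3)]
  proof (intro allI impI)
    fix j assume j: "cd j = dm (L \<cdot> ?q)" "(L \<cdot> ?q) \<cdot> j = tr (dm j)"
    have "L \<cdot> fEq C (a \<cdot> j) (b \<cdot> j) = tr (dm j)" using j ab L by simp
    hence "f \<cdot> (a \<cdot> j) = f \<cdot> (b \<cdot> j)"
      using contr[OF L(1,2) f CF, of "a \<cdot> j" "dm j" "b \<cdot> j"] j ab t by simp
    hence "a \<cdot> j = b \<cdot> j" using H j t by simp
    moreover have "cd j = D" using j t by simp
    ultimately show "?q \<cdot> j = tr (dm j)" using ab fEq_true[of "a \<cdot> j" "b \<cdot> j"] by simp
  qed
  hence "fImp C (L \<cdot> ?q) ?q = tr D" using t ab L by simp
  hence "?q = tr D" using loeb[OF L] t by blast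
  thus ?thesis using fEq_true[of a b] ab by simp
qed


lemma nonexp: assumes L: "dm L = Om" "cd L = Om" "strong_loeb C L" and f: "dm f = X" "cd f = X"
  and CF: "contractive C L f"
  shows "nonexpansive C f"
proof -
  let ?G1 = "pr T1 X"
  let ?x = "p2 T1 X \<cdot> p1 ?G1 X" and ?y = "p2 ?G1 X"
  let ?A = "fImp C (fEq C (f \<cdot> ?x) (f \<cdot> ?y)) (fEq C ?x ?y)" and ?B = "fEq C ?x ?y"
  have t: "dm ?A = dm ?B" "cd ?A = Om" "cd ?B = Om" "dm ?A = pr ?G1 X" using f by simp_all
  have "fImp C ?A ?B = tr (dm ?A)"
    unfolding fImp_valid[OF t(1-3)]
  proof (intro allI impI)
    fix r assume r: "cd r = dm ?A" "?A \<cdot> r = tr (dm r)"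
    let ?a = "p2 T1 X \<cdot> (p1 ?G1 X \<cdot> r)" and ?b = "p2 ?G1 X \<cdot> r"
    have rr: "cd r = pr ?G1 X" using r t by simp
    have ty: "dm ?a = dm r" "dm ?b = dm r" "cd ?a = X" "cd ?b = X" using rr by simp_all
    have Ar: "fImp C (fEq C (f \<cdot> ?a) (f \<cdot> ?b)) (fEq C ?a ?b) = tr (dm r)" using r rr f by simp
    have t2: "dm (fEq C (f \<cdot> ?a) (f \<cdot> ?b)) = dm (fEq C ?a ?b)" "cd (fEq C (f \<cdot> ?a) (f \<cdot> ?b)) = Om"
      "cd (fEq C ?a ?b) = Om" "dm (fEq C (f \<cdot> ?a) (f \<cdot> ?b)) = dm r" using ty f by simp_all
    have Ar2: "\<forall>k. cd k = dm r \<longrightarrow> fEq C (f \<cdot> ?a) (f \<cdot> ?b) \<cdot> k = tr (dm k) \<longrightarrow> fEq C ?a ?b \<cdot> k = tr (dm k)"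
      using Ar[unfolded t2(4)[symmetric], unfolded fImp_valid[OF t2(1-3)]] t2 by simp
    have "?a = ?b"
    proof (rule core[OF L f CF ty])
      fix j assume j: "cd j = dm r" "f \<cdot> (?a \<cdot> j) = f \<cdot> (?b \<cdot> j)"
      have "fEq C (f \<cdot> ?a) (f \<cdot> ?b) \<cdot> j = fEq C (f \<cdot> (?a \<cdot> j)) (f \<cdot> (?b \<cdot> j))" using j ty f by simp
      also have "\<dots> = tr (dm j)" using fEq_true[of "f \<cdot> (?a \<cdot> j)" "f \<cdot> (?b \<cdot> j)"] j ty f by simp
      finally have "fEq C ?a ?b \<cdot> j = tr (dm j)" using Ar2 j by blast
      hence "fEq C (?a \<cdot> j) (?b \<cdot> j) = tr (dm j)" using j ty by simp
      thus "?a \<cdot> j = ?b \<cdot> j" using fEq_true[of "?a \<cdot> j" "?b \<cdot> j"] j ty by simp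
    qed
    thus "?B \<cdot> r = tr (dm r)" using rr ty fEq_true[of ?a ?b] by simp
  qed
  hence I: "fImp C ?A ?B = tr (pr ?G1 X)" using t by simp
  have t3: "dm (fImp C ?A ?B) = pr ?G1 X" "cd (fImp C ?A ?B) = Om" using t by simp_all
  have "fAll C ?G1 X (fImp C ?A ?B) = tr ?G1" using fAll_true[OF t3] I by simp
  hence "fAll C T1 X (fAll C ?G1 X (fImp C ?A ?B)) = tr T1"
    using fAll_true[of "fAll C ?G1 X (fImp C ?A ?B)" T1 X] t3 by simp
  thus ?thesis unfolding nonexpansive_def Let_def holds_tr using f by simp
qed


lemma fix_typ: assumes f: "dm f = X" "cd f = X"
  shows "dm (fixpred C f) = T1" "cd (fixpred C f) = ex X Om"
  unfolding fixpred_def Let_def using f by simp_all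

lemma fApp_P: assumes f: "dm f = X" "cd f = X" and h: "cd h = T1" "dm s = dm h" "cd s = X"
  shows "fApp C X (fixpred C f \<cdot> h) s = fEq C s (f \<cdot> s)"
  unfolding fixpred_def Let_def fApp_def using f h by simp

lemma fixpt_eq: assumes L: "dm L = Om" "cd L = Om" "strong_loeb C L" and f: "dm f = X" "cd f = X"
  and CF: "contractive C L f" and s: "cd s = X" and t: "cd t = X" "dm t = dm s"
  and sf: "s = f \<cdot> s" and tf: "t = f \<cdot> t"
  shows "s = t"
proof (rule core[OF L f CF])
  fix j assume j: "cd j = dm s" "f \<cdot> (s \<cdot> j) = f \<cdot> (t \<cdot> j)"
  from sf have "s \<cdot> j = (f \<cdot> s) \<cdot> j" by (rule arg_cong)
  also have "\<dots> = f \<cdot> (s \<cdot> j)" using f s j by simp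
  also have "\<dots> = f \<cdot> (t \<cdot> j)" by (rule j(2))
  also have "\<dots> = (f \<cdot> t) \<cdot> j" using f t j by simp
  also have "\<dots> = t \<cdot> j" using tf by simp
  finally show "s \<cdot> j = t \<cdot> j" .
qed (use s t in auto)


lemma maxst: assumes L: "dm L = Om" "cd L = Om" "strong_loeb C L" and f: "dm f = X" "cd f = X"
  and CF: "contractive C L f"
  shows "holds C (MaxST C T1 X (fixpred C f))"
proof -
  let ?P = "fixpred C f"
  have Pt: "dm ?P = T1" "cd ?P = ex X Om" using fix_typ[OF f] by simp_all
  have S: "SubTe C T1 X ?P = tr T1"
  proof (rule SubTe_intro[OF Pt])
    fix h s t assume a: "cd h = T1" "dm s = dm h" "dm t = dm h" "cd s = X" "cd t = X"
      "fApp C X (?P \<cdot> h) s = tr (dm h)" "fApp C X (?P \<cdot> h) t = tr (dm h)"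
    have "fEq C s (f \<cdot> s) = tr (dm s)" using a fApp_P[OF f, of h s] by simp
    hence sf: "s = f \<cdot> s" using fEq_true[of s "f \<cdot> s"] a f by simp
    have "fEq C t (f \<cdot> t) = tr (dm t)" using a fApp_P[OF f, of h t] by simp
    hence tf: "t = f \<cdot> t" using fEq_true[of t "f \<cdot> t"] a f by simp
    show "s = t" by (rule fixpt_eq[OF L f CF]) (use a sf tf in auto)
  qed
  let ?Pw = "ex X Om"
  let ?G1 = "pr T1 ?Pw"
  let ?\<alpha> = "p2 T1 ?Pw" and ?a1 = "?P \<cdot> p1 T1 ?Pw"
  let ?S1 = "SubTe C ?G1 X ?\<alpha>" and ?S2 = "SubsetF C ?G1 X ?a1 ?\<alpha>" and ?S3 = "SubsetF C ?G1 X ?\<alpha> ?a1"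
  have ty0: "dm ?\<alpha> = ?G1" "cd ?\<alpha> = ?Pw" "dm ?a1 = ?G1" "cd ?a1 = ?Pw" using Pt by simp_all
  have tS: "dm ?S1 = ?G1" "cd ?S1 = Om" "dm ?S2 = ?G1" "cd ?S2 = Om" "dm ?S3 = ?G1" "cd ?S3 = Om"
    using ty0 unfolding SubTe_def SubsetF_def Let_def by simp_all
  have t: "dm (fAnd C ?S1 ?S2) = dm ?S3" "cd (fAnd C ?S1 ?S2) = Om" "cd ?S3 = Om"
    "dm (fAnd C ?S1 ?S2) = ?G1" using tS by simp_all
  have "fImp C (fAnd C ?S1 ?S2) ?S3 = tr (dm (fAnd C ?S1 ?S2))"
    unfolding fImp_valid[OF t(1-3)]
  proof (intro allI impI)
    fix k assume k: "cd k = dm (fAnd C ?S1 ?S2)" "fAnd C ?S1 ?S2 \<cdot> k = tr (dm k)"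
    have kk: "cd k = ?G1" using k t by simp
    have "fAnd C (?S1 \<cdot> k) (?S2 \<cdot> k) = tr (dm k)" using k kk tS by simp
    hence V: "?S1 \<cdot> k = tr (dm k)" "?S2 \<cdot> k = tr (dm k)"
      using fAnd_true[of "?S1 \<cdot> k" "?S2 \<cdot> k"] kk tS by simp_all
    have V1: "SubTe C (dm k) X (?\<alpha> \<cdot> k) = tr (dm k)" using V(1) SubTe_comp[of ?\<alpha> ?G1 X k] ty0 kk by simp
    have V2: "SubsetF C (dm k) X (?a1 \<cdot> k) (?\<alpha> \<cdot> k) = tr (dm k)"
      using V(2) SubsetF_comp[of ?a1 ?G1 ?\<alpha> X k] ty0 kk by simp
    have tk: "dm (?\<alpha> \<cdot> k) = dm k" "cd (?\<alpha> \<cdot> k) = ?Pw" "dm (?a1 \<cdot> k) = dm k" "cd (?a1 \<cdot> k) = ?Pw"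
      using ty0 kk by simp_all
    have "SubsetF C (dm k) X (?\<alpha> \<cdot> k) (?a1 \<cdot> k) = tr (dm k)"
    proof (rule SubsetF_intro[OF tk(1,3,2,4)])
      fix h s assume hs: "cd h = dm k" "dm s = dm h" "cd s = X" "fApp C X ((?\<alpha> \<cdot> k) \<cdot> h) s = tr (dm h)"
      have "s = f \<cdot> s"
      proof (rule core[OF L f CF])
        fix j assume j: "cd j = dm s" "f \<cdot> (s \<cdot> j) = f \<cdot> ((f \<cdot> s) \<cdot> j)"
        let ?u = "f \<cdot> (s \<cdot> j)"
        have fu: "f \<cdot> ?u = ?u" using j f hs by simp
        have u: "dm ?u = dm (h \<cdot> j)" "cd ?u = X" "cd (h \<cdot> j) = dm k" using j f hs by simp_all
        have "fApp C X ((?a1 \<cdot> k) \<cdot> (h \<cdot> j)) ?u = fEq C ?u (f \<cdot> ?u)"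
          using fApp_P[OF f, of "p1 T1 ?Pw \<cdot> (k \<cdot> (h \<cdot> j))" ?u] u kk Pt by simp
        also have "\<dots> = tr (dm ?u)" using fEq_true[of ?u "f \<cdot> ?u"] fu u f by simp
        finally have A1: "fApp C X ((?a1 \<cdot> k) \<cdot> (h \<cdot> j)) ?u = tr (dm (h \<cdot> j))" using u by simp
        have A2: "fApp C X ((?\<alpha> \<cdot> k) \<cdot> (h \<cdot> j)) ?u = tr (dm (h \<cdot> j))"
          by (rule SubsetF_elim[OF tk(3,1,4,2) V2 u(3) u(1,2) A1])
        have "fApp C X ((?\<alpha> \<cdot> k) \<cdot> h) s \<cdot> j = tr (dm j)" using hs j by simp
        hence A3: "fApp C X ((?\<alpha> \<cdot> k) \<cdot> (h \<cdot> j)) (s \<cdot> j) = tr (dm (h \<cdot> j))"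
          using hs j kk ty0 by simp
        have "s \<cdot> j = ?u"
          by (rule SubTe_elim[OF tk(1,2) V1 u(3) _ u(1) _ u(2) A3 A2]) (use hs j in simp_all)
        also have "\<dots> = (f \<cdot> s) \<cdot> j" using j f hs by simp
        finally show "s \<cdot> j = (f \<cdot> s) \<cdot> j" .
      qed (use hs f in simp_all)
      moreover have "fApp C X ((?a1 \<cdot> k) \<cdot> h) s = fEq C s (f \<cdot> s)"
        using fApp_P[OF f, of "p1 T1 ?Pw \<cdot> (k \<cdot> h)" s] hs kk Pt by simp
      ultimately show "fApp C X ((?a1 \<cdot> k) \<cdot> h) s = tr (dm h)"
        using fEq_true[of s "f \<cdot> s"] hs f by simp
    qed
    thus "?S3 \<cdot> k = tr (dm k)" using SubsetF_comp[of ?\<alpha> ?G1 ?a1 X k] ty0 kk by simp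
  qed
  hence "fImp C (fAnd C ?S1 ?S2) ?S3 = tr (pr T1 ?Pw)" using t by simp
  moreover have "dm (fImp C (fAnd C ?S1 ?S2) ?S3) = pr T1 ?Pw" "cd (fImp C (fAnd C ?S1 ?S2) ?S3) = Om"
    using t by simp_all
  ultimately have Q: "fAll C T1 ?Pw (fImp C (fAnd C ?S1 ?S2) ?S3) = tr T1"
    using fAll_true by blast
  have tQ: "dm (SubTe C T1 X ?P) = T1" "cd (SubTe C T1 X ?P) = Om"
    using Pt unfolding SubTe_def Let_def by simp_all
  have tQ2: "dm (fAll C T1 ?Pw (fImp C (fAnd C ?S1 ?S2) ?S3)) = T1"
     "cd (fAll C T1 ?Pw (fImp C (fAnd C ?S1 ?S2) ?S3)) = Om" using t by simp_all
  have "fAnd C (SubTe C T1 X ?P) (fAll C T1 ?Pw (fImp C (fAnd C ?S1 ?S2) ?S3)) = tr T1"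
    using fAnd_true[of "SubTe C T1 X ?P" "fAll C T1 ?Pw (fImp C (fAnd C ?S1 ?S2) ?S3)"] tQ tQ2 S Q by simp
  thus ?thesis unfolding MaxST_def Let_def holds_tr by simp
qed

end

theorem corollary5p11:
  fixes C :: "('o, 'a) topos_sig" and L f :: 'a and X :: 'o
  assumes "elementary_topos C"
    and "t_dom C L = t_Omega C" and "t_cod C L = t_Omega C"
    and "strong_loeb C L"
    and "t_dom C f = X" and "t_cod C f = X"
    and "contractive C L f"
  shows "nonexpansive C f \<and> holds C (MaxST C (t_one C) X (fixpred C f))"
proof -
  interpret topos C by unfold_locales (rule assms(1))
  show ?thesis using nonexp[OF assms(2-7)] maxst[OF assms(2-7)] by blast
qed

end
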